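(* Let $\mathcal M$ be a map in class $2_{\{0,1\}}$ with underlying graph $\Gamma$. Then the boundaries of the faces of $\mathcal M$ are $\mathrm{Aut}(\mathcal M)$-symmetric consistent cycles of $\Gamma$.
   Context: A map is a $2$-cell embedding of a connected simple graph $\Gamma$ (its underlying graph) in a closed surface; the components of the complement are the faces. All maps considered are polytopal: flags (triangles of the barycentric subdivision) correspond bijectively to incident triples (vertex, edge, face). For a flag $\Phi$ and $i\in\{0,1,2\}$, $\Phi^i$ denotes the unique flag differing from $\Phi$ exactly in its vertex ($i=0$), edge ($i=1$) or face ($i=2$). $\mathrm{Aut}(\mathcal M)$ is the group of automorphisms of $\Gamma$ mapping faces to faces; it acts on flags. A map is in class $2_{\{0,1\}}$ if $\mathrm{Aut}(\mathcal M)$ has exactly two orbits on flags and, for every flag $\Phi$, the flags $\Phi^0$ and $\Phi^1$ lie in the orbit of $\Phi$ while $\Phi^2$ does not. (For such maps $\mathrm{Aut}(\mathcal M)$ acts arc-transitively on $\Gamma$.) For an arc-transitive group $G\le \mathrm{Aut}(\Gamma)$, a directed cycle $(v_0,\ldots,v_{r-1})$ is $G$-consistent if some $g\in G$ maps each $v_i$ to $v_{i+1}$ (indices mod $r$); an undirected cycle is $G$-consistent if both its orientations are, and it is $G$-symmetric if moreover some element of $G$ maps one orientation to the other. *)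

theory Defs
  imports Main
begin

text \<open>Faces are abstract elements of F;
  bd f is the set of edges on the boundary of face f.\<close>

definition simple_graph :: "'v set \<Rightarrow> 'v set set \<Rightarrow> bool" where
  "simple_graph V E \<longleftrightarrow> (\<forall>e\<in>E. \<exists>x y. x \<in> V \<and> y \<in> V \<and> x \<noteq> y \<and> e = {x, y})"

definition connected_graph :: "'v set \<Rightarrow> 'v set set \<Rightarrow> bool" where
  "connected_graph V E \<longleftrightarrow> (\<forall>x\<in>V. \<forall>y\<in>V. (x, y) \<in> {(a, b). {a, b} \<in> E}\<^sup>*)"

definition graph_cycle :: "'v set set \<Rightarrow> 'v list \<Rightarrow> bool" where
  "graph_cycle E vs \<longleftrightarrow> length vs \<ge> 3 \<and> distinct vs \<and>
     (\<forall>i < length vs. {vs ! i, vs ! (Suc i mod length vs)} \<in> E)"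

definition cycle_edges :: "'v list \<Rightarrow> 'v set set" where
  "cycle_edges vs = {{vs ! i, vs ! (Suc i mod length vs)} | i. i < length vs}"

definition link_rel :: "'f set \<Rightarrow> ('f \<Rightarrow> 'v set set) \<Rightarrow> 'v \<Rightarrow> ('v set \<times> 'v set) set" where
  "link_rel F bd v = {(e, e'). v \<in> e \<and> v \<in> e' \<and> e \<noteq> e' \<and> (\<exists>f\<in>F. e \<in> bd f \<and> e' \<in> bd f)}"

text \<open>Polytopal map: finite connected simple graph, every face boundary is a cycle of the
  graph, every edge lies on exactly two faces, and around each vertex the faces form a
  single cycle (so the faces glue to a closed surface).\<close>
definition polytopal_map :: "'v set \<Rightarrow> 'v set set \<Rightarrow> 'f set \<Rightarrow> ('f \<Rightarrow> 'v set set) \<Rightarrow> bool" where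
  "polytopal_map V E F bd \<longleftrightarrow>
     finite V \<and> simple_graph V E \<and> connected_graph V E \<and> finite F \<and>
     (\<forall>f\<in>F. \<exists>vs. graph_cycle E vs \<and> cycle_edges vs = bd f) \<and>
     (\<forall>e\<in>E. card {f \<in> F. e \<in> bd f} = 2) \<and>
     (\<forall>v\<in>V. \<forall>e\<in>E. \<forall>e'\<in>E. v \<in> e \<longrightarrow> v \<in> e' \<longrightarrow> (e, e') \<in> (link_rel F bd v)\<^sup>*)"

definition map_aut :: "'v set \<Rightarrow> 'v set set \<Rightarrow> 'f set \<Rightarrow> ('f \<Rightarrow> 'v set set) \<Rightarrow>
    ('v \<Rightarrow> 'v) \<Rightarrow> ('f \<Rightarrow> 'f) \<Rightarrow> bool" where
  "map_aut V E F bd \<sigma> \<tau> \<longleftrightarrow>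
     bij_betw \<sigma> V V \<and> (\<forall>x\<in>V. \<forall>y\<in>V. {x, y} \<in> E \<longleftrightarrow> {\<sigma> x, \<sigma> y} \<in> E) \<and>
     bij_betw \<tau> F F \<and> (\<forall>f\<in>F. bd (\<tau> f) = (\<lambda>e. \<sigma> ` e) ` bd f)"

text \<open>Aut(M) viewed as a group of automorphisms of the underlying graph.\<close>
definition map_aut_group :: "'v set \<Rightarrow> 'v set set \<Rightarrow> 'f set \<Rightarrow> ('f \<Rightarrow> 'v set set) \<Rightarrow> ('v \<Rightarrow> 'v) set" where
  "map_aut_group V E F bd = {\<sigma>. \<exists>\<tau>. map_aut V E F bd \<sigma> \<tau>}"

definition flags :: "'f set \<Rightarrow> ('f \<Rightarrow> 'v set set) \<Rightarrow> ('v \<times> 'v set \<times> 'f) set" where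
  "flags F bd = {(v, e, f). f \<in> F \<and> e \<in> bd f \<and> v \<in> e}"

fun flag_act :: "('v \<Rightarrow> 'v) \<Rightarrow> ('f \<Rightarrow> 'f) \<Rightarrow> 'v \<times> 'v set \<times> 'f \<Rightarrow> 'v \<times> 'v set \<times> 'f" where
  "flag_act \<sigma> \<tau> (v, e, f) = (\<sigma> v, \<sigma> ` e, \<tau> f)"

definition flag_orbit :: "'v set \<Rightarrow> 'v set set \<Rightarrow> 'f set \<Rightarrow> ('f \<Rightarrow> 'v set set) \<Rightarrow>
    'v \<times> 'v set \<times> 'f \<Rightarrow> ('v \<times> 'v set \<times> 'f) set" where
  "flag_orbit V E F bd \<Phi> = {flag_act \<sigma> \<tau> \<Phi> | \<sigma> \<tau>. map_aut V E F bd \<sigma> \<tau>}"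

fun flag_adj0 :: "'v \<times> 'v set \<times> 'f \<Rightarrow> 'v \<times> 'v set \<times> 'f \<Rightarrow> bool" where
  "flag_adj0 (v, e, f) (v', e', f') \<longleftrightarrow> v \<noteq> v' \<and> e = e' \<and> f = f'"
fun flag_adj1 :: "'v \<times> 'v set \<times> 'f \<Rightarrow> 'v \<times> 'v set \<times> 'f \<Rightarrow> bool" where
  "flag_adj1 (v, e, f) (v', e', f') \<longleftrightarrow> v = v' \<and> e \<noteq> e' \<and> f = f'"
fun flag_adj2 :: "'v \<times> 'v set \<times> 'f \<Rightarrow> 'v \<times> 'v set \<times> 'f \<Rightarrow> bool" where
  "flag_adj2 (v, e, f) (v', e', f') \<longleftrightarrow> v = v' \<and> e = e' \<and> f \<noteq> f'"

definition class_2_01 :: "'v set \<Rightarrow> 'v set set \<Rightarrow> 'f set \<Rightarrow> ('f \<Rightarrow> 'v set set) \<Rightarrow> bool" where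
  "class_2_01 V E F bd \<longleftrightarrow>
     polytopal_map V E F bd \<and>
     card (flag_orbit V E F bd ` flags F bd) = 2 \<and>
     (\<forall>\<Phi>\<in>flags F bd. \<forall>\<Psi>\<in>flags F bd.
        (flag_adj0 \<Phi> \<Psi> \<longrightarrow> \<Psi> \<in> flag_orbit V E F bd \<Phi>) \<and>
        (flag_adj1 \<Phi> \<Psi> \<longrightarrow> \<Psi> \<in> flag_orbit V E F bd \<Phi>) \<and>
        (flag_adj2 \<Phi> \<Psi> \<longrightarrow> \<Psi> \<notin> flag_orbit V E F bd \<Phi>))"

definition consistent_dcycle :: "('v \<Rightarrow> 'v) set \<Rightarrow> 'v list \<Rightarrow> bool" where
  "consistent_dcycle G vs \<longleftrightarrow>
     (\<exists>g\<in>G. \<forall>i < length vs. g (vs ! i) = vs ! (Suc i mod length vs))"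

definition symmetric_consistent_cycle :: "('v \<Rightarrow> 'v) set \<Rightarrow> 'v list \<Rightarrow> bool" where
  "symmetric_consistent_cycle G vs \<longleftrightarrow>
     consistent_dcycle G vs \<and> consistent_dcycle G (rev vs) \<and>
     (\<exists>g\<in>G. \<exists>k. \<forall>i < length vs. g (vs ! i) = rev vs ! ((i + k) mod length vs))"

end

theory Submission
  imports Defs
begin

definition cyc :: "'v list \<Rightarrow> int \<Rightarrow> 'v" where
  "cyc vs j = vs ! nat (j mod int (length vs))"

lemma cyc_idx: "length vs > 0 \<Longrightarrow> nat (j mod int (length vs)) < length vs"
  by (simp add: nat_less_iff)

lemma cyc_in: "length vs > 0 \<Longrightarrow> cyc vs j \<in> set vs"
  unfolding cyc_def using cyc_idx[of vs j] by (simp add: nth_mem)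

lemma cyc_eq_iff:
  assumes "distinct vs" "length vs > 0"
  shows "cyc vs a = cyc vs b \<longleftrightarrow> int (length vs) dvd (a - b)"
proof -
  have "cyc vs a = cyc vs b \<longleftrightarrow> nat (a mod int (length vs)) = nat (b mod int (length vs))"
    unfolding cyc_def
    by (rule nth_eq_iff_index_eq[OF assms(1) cyc_idx[OF assms(2)] cyc_idx[OF assms(2)]])
  also have "\<dots> \<longleftrightarrow> a mod int (length vs) = b mod int (length vs)"
    using assms by (intro eq_nat_nat_iff) simp_all
  also have "\<dots> \<longleftrightarrow> int (length vs) dvd (a - b)" by (simp add: mod_eq_dvd_iff)
  finally show ?thesis .
qed

lemma cyc_cong: "int (length vs) dvd (a - b) \<Longrightarrow> cyc vs a = cyc vs b"
proof -
  assume "int (length vs) dvd (a - b)"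
  then have "a mod int (length vs) = b mod int (length vs)" by (simp add: mod_eq_dvd_iff)
  then show ?thesis unfolding cyc_def by (simp only:)
qed

lemma cyc_nth: "i < length vs \<Longrightarrow> vs ! i = cyc vs (int i)"
  unfolding cyc_def by (simp add: nat_mod_as_int[symmetric])

lemma cyc_nth_suc: "i < length vs \<Longrightarrow> vs ! (Suc i mod length vs) = cyc vs (int i + 1)"
proof -
  assume "i < length vs"
  have "(int i + 1) mod int (length vs) = int (Suc i mod length vs)" by (simp add: zmod_int add.commute)
  then show ?thesis unfolding cyc_def by (simp only: nat_int)
qed

lemma cyc_rev: "m < length vs \<Longrightarrow> rev vs ! m = cyc vs (-1 - int m)"
proof -
  assume m: "m < length vs"
  have "rev vs ! m = vs ! (length vs - Suc m)" using m by (simp add: rev_nth)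
  also have "\<dots> = cyc vs (int (length vs - Suc m))" using m by (simp add: cyc_nth)
  also have "\<dots> = cyc vs (-1 - int m)" using m by (intro cyc_cong) (simp add: of_nat_diff)
  finally show ?thesis .
qed

lemma cycle_edges_cyc:
  assumes "e \<in> cycle_edges vs" shows "\<exists>i. e = {cyc vs i, cyc vs (i+1)}"
proof -
  from assms obtain i where i: "i < length vs" "e = {vs ! i, vs ! (Suc i mod length vs)}"
    unfolding cycle_edges_def by blast
  then have "e = {cyc vs (int i), cyc vs (int i + 1)}"
    using cyc_nth[OF i(1)] cyc_nth_suc[OF i(1)] by simp
  then show ?thesis by (rule exI)
qed

lemma cyc_edge_in:
  assumes "length vs > 0" shows "{cyc vs i, cyc vs (i+1)} \<in> cycle_edges vs"
proof -
  define m where "m = nat (i mod int (length vs))"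
  have m: "m < length vs" unfolding m_def by (rule cyc_idx[OF assms])
  have "cyc vs i = vs ! m" using assms by (simp add: cyc_def m_def)
  moreover have "cyc vs (i+1) = cyc vs (int m + 1)"
  proof (rule cyc_cong)
    have "int m = i mod int (length vs)" using assms m_def by simp
    then have "i + 1 - (int m + 1) = i - i mod int (length vs)" by simp
    then show "int (length vs) dvd (i + 1 - (int m + 1))" by (simp add: minus_mod_eq_mult_div)
  qed
  ultimately have eqn: "{cyc vs i, cyc vs (i+1)} = {vs ! m, vs ! (Suc m mod length vs)}"
    using cyc_nth_suc[OF m] by simp
  show ?thesis unfolding cycle_edges_def mem_Collect_eq
    by (intro exI[of _ m] conjI eqn m)
qed


lemma int_dvd_sub_mod: "(n::int) dvd (a - a mod n)"
  by (simp add: minus_mod_eq_mult_div)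

lemma refl_step:
  fixes vs :: "'v list"
  assumes d: "distinct vs" and l: "length vs \<ge> 3" and inj: "inj_on \<sigma> (set vs)"
    and pres: "\<And>e. e \<in> cycle_edges vs \<Longrightarrow> \<sigma> ` e \<in> cycle_edges vs"
    and h0: "\<sigma> (cyc vs q) = cyc vs c" and h1: "\<sigma> (cyc vs (q+1)) = cyc vs (c - 1)"
  shows "\<sigma> (cyc vs (q+2)) = cyc vs (c - 2)"
proof -
  define n where "n = int (length vs)"
  have n3: "n \<ge> 3" using l n_def by simp
  have lp: "length vs > 0" using l by linarith
  have eq: "cyc vs a = cyc vs b \<longleftrightarrow> n dvd (a - b)" for a b
    using cyc_eq_iff[OF d lp] n_def by simp
  have injc: "\<sigma> (cyc vs a) = \<sigma> (cyc vs b) \<Longrightarrow> cyc vs a = cyc vs b" for a b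
    using inj cyc_in[OF lp] by (meson inj_onD)
  define x where "x = \<sigma> (cyc vs (q+2))"
  have "{cyc vs (q+1), cyc vs (q+1+1)} \<in> cycle_edges vs" by (rule cyc_edge_in[OF lp])
  moreover have "q + 1 + 1 = q + 2" by simp
  ultimately have "{cyc vs (q+1), cyc vs (q+2)} \<in> cycle_edges vs" by simp
  then have "\<sigma> ` {cyc vs (q+1), cyc vs (q+2)} \<in> cycle_edges vs" by (rule pres)
  then have "{cyc vs (c-1), x} \<in> cycle_edges vs" using h1 x_def by simp
  then obtain i where i: "{cyc vs (c-1), x} = {cyc vs i, cyc vs (i+1)}"
    using cycle_edges_cyc by blast
  have n1: "\<not> n dvd 1" using n3 zdvd_imp_le[of n 1] by auto
  have n2: "\<not> n dvd 2" using n3 zdvd_imp_le[of n 2] by auto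
  have x2: "x \<noteq> cyc vs c"
  proof
    assume "x = cyc vs c"
    then have "cyc vs (q+2) = cyc vs q" using injc h0 x_def by metis
    then have "n dvd 2" using eq by simp
    then show False using n2 by simp
  qed
  from i have "(cyc vs (c-1) = cyc vs i \<and> x = cyc vs (i+1)) \<or> (cyc vs (c-1) = cyc vs (i+1) \<and> x = cyc vs i)"
    by (simp add: doubleton_eq_iff)
  then show ?thesis
  proof
    assume a: "cyc vs (c-1) = cyc vs i \<and> x = cyc vs (i+1)"
    then have "n dvd (c - 1 - i)" using eq by simp
    moreover have "i + 1 - c = - (c - 1 - i)" by simp
    ultimately have "n dvd (i + 1 - c)" by (simp only: dvd_minus_iff)
    then have "x = cyc vs c" using a eq by simp
    then show ?thesis using x2 by simp
  next
    assume a: "cyc vs (c-1) = cyc vs (i+1) \<and> x = cyc vs i"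
    then have "n dvd (c - 1 - (i+1))" using eq by simp
    moreover have "i - (c - 2) = - (c - 1 - (i+1))" by simp
    ultimately have "n dvd (i - (c - 2))" by (simp only: dvd_minus_iff)
    then show ?thesis using a eq x_def by simp
  qed
qed

lemma refl_ext:
  fixes vs :: "'v list"
  assumes d: "distinct vs" and l: "length vs \<ge> 3" and inj: "inj_on \<sigma> (set vs)"
    and pres: "\<And>e. e \<in> cycle_edges vs \<Longrightarrow> \<sigma> ` e \<in> cycle_edges vs"
    and p0: "\<sigma> (cyc vs p) = cyc vs (c - p)" and p1: "\<sigma> (cyc vs (p+1)) = cyc vs (c - p - 1)"
  shows "\<sigma> (cyc vs j) = cyc vs (c - j)"
proof -
  define n where "n = int (length vs)"
  have lp: "length vs > 0" using l by linarith
  have ind: "\<sigma> (cyc vs (p + int m)) = cyc vs (c - p - int m) \<and>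
             \<sigma> (cyc vs (p + int m + 1)) = cyc vs (c - p - int m - 1)" for m :: nat
  proof (induction m)
    case 0
    then show ?case using p0 p1 by simp
  next
    case (Suc m)
    have "\<sigma> (cyc vs ((p + int m) + 2)) = cyc vs ((c - p - int m) - 2)"
      using refl_step[OF d l inj pres, of "p + int m" "c - p - int m"] Suc.IH
      by (simp add: algebra_simps)
    moreover have "p + int m + 2 = p + int (Suc m) + 1" by simp
    moreover have "c - p - int m - 2 = c - p - int (Suc m) - 1" by simp
    ultimately show ?case using Suc.IH by (simp add: algebra_simps)
  qed
  define m where "m = nat ((j - p) mod n)"
  have nn: "n > 0" using lp n_def by simp
  have im: "int m = (j - p) mod n" using nn m_def by simp
  have "cyc vs j = cyc vs (p + int m)"
  proof (rule cyc_cong)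
    have "j - (p + int m) = (j - p) - (j - p) mod n" using im by simp
    then show "int (length vs) dvd (j - (p + int m))" using int_dvd_sub_mod n_def by metis
  qed
  moreover have "cyc vs (c - j) = cyc vs (c - p - int m)"
  proof (rule cyc_cong)
    have "c - j - (c - p - int m) = - ((j - p) - (j - p) mod n)" using im by simp
    then show "int (length vs) dvd (c - j - (c - p - int m))"
      using int_dvd_sub_mod[of n "j - p"] n_def by (simp only: dvd_minus_iff)
  qed
  ultimately show ?thesis using ind[of m] by simp
qed

lemma map_aut_comp:
  assumes "map_aut V E F bd \<sigma>1 \<tau>1" "map_aut V E F bd \<sigma>2 \<tau>2"
  shows "map_aut V E F bd (\<sigma>2 \<circ> \<sigma>1) (\<tau>2 \<circ> \<tau>1)"
proof -
  have b1: "bij_betw \<sigma>1 V V" "bij_betw \<tau>1 F F" and b2: "bij_betw \<sigma>2 V V" "bij_betw \<tau>2 F F"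
    using assms unfolding map_aut_def by auto
  have e1: "\<forall>x\<in>V. \<forall>y\<in>V. {x, y} \<in> E \<longleftrightarrow> {\<sigma>1 x, \<sigma>1 y} \<in> E"
   and e2: "\<forall>x\<in>V. \<forall>y\<in>V. {x, y} \<in> E \<longleftrightarrow> {\<sigma>2 x, \<sigma>2 y} \<in> E"
   and f1: "\<forall>f\<in>F. bd (\<tau>1 f) = (\<lambda>e. \<sigma>1 ` e) ` bd f"
   and f2: "\<forall>f\<in>F. bd (\<tau>2 f) = (\<lambda>e. \<sigma>2 ` e) ` bd f"
    using assms unfolding map_aut_def by auto
  have mv: "x \<in> V \<Longrightarrow> \<sigma>1 x \<in> V" for x using b1 bij_betwE by blast
  have mf: "f \<in> F \<Longrightarrow> \<tau>1 f \<in> F" for f using b1 bij_betwE by blast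
  show ?thesis unfolding map_aut_def
  proof (intro conjI ballI)
    show "bij_betw (\<sigma>2 \<circ> \<sigma>1) V V" using b1 b2 bij_betw_trans by blast
    show "bij_betw (\<tau>2 \<circ> \<tau>1) F F" using b1 b2 bij_betw_trans by blast
    fix x y assume "x \<in> V" "y \<in> V"
    then show "{x, y} \<in> E \<longleftrightarrow> {(\<sigma>2 \<circ> \<sigma>1) x, (\<sigma>2 \<circ> \<sigma>1) y} \<in> E"
      using e1 e2 mv by simp
  next
    fix f assume "f \<in> F"
    then show "bd ((\<tau>2 \<circ> \<tau>1) f) = (\<lambda>e. (\<sigma>2 \<circ> \<sigma>1) ` e) ` bd f"
      using f1 f2 mf by (simp add: image_image image_comp)
  qed
qed

theorem lemma2p5:
  fixes V :: "'v set" and E :: "'v set set" and F :: "'f set" and bd :: "'f \<Rightarrow> 'v set set"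
  assumes "class_2_01 V E F bd"
    and "f \<in> F"
    and "graph_cycle E vs" and "cycle_edges vs = bd f"
  shows "symmetric_consistent_cycle (map_aut_group V E F bd) vs"
proof -
  note cl = assms(1)[unfolded class_2_01_def]
  have sg: "simple_graph V E" using cl unfolding polytopal_map_def by simp
  have l: "length vs \<ge> 3" and d: "distinct vs"
    and ed: "\<forall>i < length vs. {vs ! i, vs ! (Suc i mod length vs)} \<in> E"
    using assms(3) unfolding graph_cycle_def by auto
  have lp: "length vs > 0" using l by linarith
  define n where "n = int (length vs)"
  have n3: "n \<ge> 3" using l n_def by simp
  have eq: "cyc vs a = cyc vs b \<longleftrightarrow> n dvd (a - b)" for a b
    using cyc_eq_iff[OF d lp] n_def by simp
  have n1: "\<not> n dvd 1" using n3 zdvd_imp_le[of n 1] by auto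
  have n2: "\<not> n dvd 2" using n3 zdvd_imp_le[of n 2] by auto
  have setV: "set vs \<subseteq> V"
  proof
    fix x assume "x \<in> set vs"
    then obtain i where i: "i < length vs" "x = vs ! i" by (auto simp: in_set_conv_nth)
    then have "{vs ! i, vs ! (Suc i mod length vs)} \<in> E" using ed by simp
    then obtain a b where "a \<in> V" "b \<in> V" "{vs ! i, vs ! (Suc i mod length vs)} = {a, b}"
      using sg unfolding simple_graph_def by blast
    then show "x \<in> V" using i by (auto simp: doubleton_eq_iff)
  qed
  have autfacts: "inj_on \<sigma> (set vs) \<and> (\<forall>e \<in> cycle_edges vs. \<sigma> ` e \<in> cycle_edges vs)"
    if "map_aut V E F bd \<sigma> \<tau>" "\<tau> f = f" for \<sigma> \<tau>
  proof
    have "bij_betw \<sigma> V V" using that unfolding map_aut_def by simp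
    then show "inj_on \<sigma> (set vs)" using setV bij_betw_imp_inj_on inj_on_subset by blast
    have "\<forall>g\<in>F. bd (\<tau> g) = (\<lambda>e. \<sigma> ` e) ` bd g" using that(1) unfolding map_aut_def by blast
    then have "bd (\<tau> f) = (\<lambda>e. \<sigma> ` e) ` bd f" using assms(2) by blast
    then have "bd f = (\<lambda>e. \<sigma> ` e) ` bd f" using that(2) by simp
    then show "\<forall>e \<in> cycle_edges vs. \<sigma> ` e \<in> cycle_edges vs" using assms(4) by auto
  qed
  have c01: "cyc vs 0 \<noteq> cyc vs 1" using eq n1 by simp
  have c12: "cyc vs 1 \<noteq> cyc vs 2" using eq n1 by simp
  have c02: "cyc vs 0 \<noteq> cyc vs 2" using eq n2 by simp
  define e0 where "e0 = {cyc vs 0, cyc vs 1}"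
  define e1 where "e1 = {cyc vs 1, cyc vs 2}"
  have e0in: "e0 \<in> bd f" using cyc_edge_in[OF lp, of 0] assms(4) e0_def by simp
  have e1in: "e1 \<in> bd f" using cyc_edge_in[OF lp, of 1] assms(4) e1_def by simp
  have fl1: "(cyc vs 0, e0, f) \<in> flags F bd" using e0in assms(2) e0_def by (simp add: flags_def)
  have fl2: "(cyc vs 1, e0, f) \<in> flags F bd" using e0in assms(2) e0_def by (simp add: flags_def)
  have fl3: "(cyc vs 1, e1, f) \<in> flags F bd" using e1in assms(2) e1_def by (simp add: flags_def)
  have A0: "\<forall>\<Phi>\<in>flags F bd. \<forall>\<Psi>\<in>flags F bd. flag_adj0 \<Phi> \<Psi> \<longrightarrow> \<Psi> \<in> flag_orbit V E F bd \<Phi>"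
    and A1: "\<forall>\<Phi>\<in>flags F bd. \<forall>\<Psi>\<in>flags F bd. flag_adj1 \<Phi> \<Psi> \<longrightarrow> \<Psi> \<in> flag_orbit V E F bd \<Phi>"
    using cl by blast+
  have "flag_adj0 (cyc vs 0, e0, f) (cyc vs 1, e0, f)" using c01 by simp
  then have "(cyc vs 1, e0, f) \<in> flag_orbit V E F bd (cyc vs 0, e0, f)"
    using A0 fl1 fl2 by blast
  then obtain \<sigma>0 \<tau>0 where a0: "map_aut V E F bd \<sigma>0 \<tau>0"
    and s0: "cyc vs 1 = \<sigma>0 (cyc vs 0)" "e0 = \<sigma>0 ` e0" "f = \<tau>0 f"
    unfolding flag_orbit_def by auto
  have e01: "e1 \<noteq> e0" using c02 c12 e0_def e1_def by (auto simp: doubleton_eq_iff)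
  have "flag_adj1 (cyc vs 1, e1, f) (cyc vs 1, e0, f)" using e01 by simp
  then have "(cyc vs 1, e0, f) \<in> flag_orbit V E F bd (cyc vs 1, e1, f)"
    using A1 fl3 fl2 by blast
  then obtain \<sigma>1 \<tau>1 where a1: "map_aut V E F bd \<sigma>1 \<tau>1"
    and s1: "cyc vs 1 = \<sigma>1 (cyc vs 1)" "e0 = \<sigma>1 ` e1" "f = \<tau>1 f"
    unfolding flag_orbit_def by auto
  have af0: "inj_on \<sigma>0 (set vs)" "\<And>e. e \<in> cycle_edges vs \<Longrightarrow> \<sigma>0 ` e \<in> cycle_edges vs"
    using autfacts[OF a0] s0 by auto
  have af1: "inj_on \<sigma>1 (set vs)" "\<And>e. e \<in> cycle_edges vs \<Longrightarrow> \<sigma>1 ` e \<in> cycle_edges vs"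
    using autfacts[OF a1] s1 by auto
  have cin: "cyc vs a \<in> set vs" for a using cyc_in[OF lp] .
  have "\<sigma>0 (cyc vs 1) \<noteq> cyc vs 1"
    using s0(1) c01 inj_onD[OF af0(1) _ cin cin] by metis
  then have s0b: "\<sigma>0 (cyc vs 1) = cyc vs 0" using s0 e0_def by (auto simp: doubleton_eq_iff)
  have "\<sigma>1 (cyc vs 2) \<noteq> cyc vs 1"
    using s1(1) c12 inj_onD[OF af1(1) _ cin cin] by metis
  then have s1b: "\<sigma>1 (cyc vs 2) = cyc vs 0" using s1 e0_def e1_def by (auto simp: doubleton_eq_iff)
  have R0: "\<sigma>0 (cyc vs j) = cyc vs (1 - j)" for j
    using refl_ext[OF d l af0, of 0 1 j] s0(1) s0b by simp
  have R1: "\<sigma>1 (cyc vs j) = cyc vs (2 - j)" for j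
    using refl_ext[OF d l af1, of 1 2 j] s1(1) s1b by simp
  have G0: "\<sigma>0 \<in> map_aut_group V E F bd" using a0 unfolding map_aut_group_def by blast
  have G10: "\<sigma>1 \<circ> \<sigma>0 \<in> map_aut_group V E F bd"
    using map_aut_comp[OF a0 a1] unfolding map_aut_group_def by blast
  have G01: "\<sigma>0 \<circ> \<sigma>1 \<in> map_aut_group V E F bd"
    using map_aut_comp[OF a1 a0] unfolding map_aut_group_def by blast
  have C1: "consistent_dcycle (map_aut_group V E F bd) vs"
    unfolding consistent_dcycle_def
  proof (intro bexI[OF _ G10] allI impI)
    fix i assume i: "i < length vs"
    have "(\<sigma>1 \<circ> \<sigma>0) (vs ! i) = cyc vs (2 - (1 - int i))" using i R0 R1 by (simp add: cyc_nth)
    also have "\<dots> = cyc vs (int i + 1)" by (simp add: algebra_simps)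
    finally show "(\<sigma>1 \<circ> \<sigma>0) (vs ! i) = vs ! (Suc i mod length vs)" using cyc_nth_suc[OF i] by simp
  qed
  have revsuc: "rev vs ! (Suc i mod length vs) = cyc vs (- 2 - int i)" if i: "i < length vs" for i
  proof -
    have "Suc i mod length vs < length vs" using lp by simp
    then have "rev vs ! (Suc i mod length vs) = cyc vs (-1 - int (Suc i mod length vs))"
      by (rule cyc_rev)
    also have "\<dots> = cyc vs (- 2 - int i)"
    proof (rule cyc_cong)
      have "int (Suc i mod length vs) = (int i + 1) mod n" using n_def by (simp add: zmod_int add.commute)
      then have "-1 - int (Suc i mod length vs) - (- 2 - int i) = (int i + 1) - (int i + 1) mod n"
        by simp
      then show "int (length vs) dvd (-1 - int (Suc i mod length vs) - (- 2 - int i))"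
        using int_dvd_sub_mod n_def by metis
    qed
    finally show ?thesis .
  qed
  have C2: "consistent_dcycle (map_aut_group V E F bd) (rev vs)"
    unfolding consistent_dcycle_def
  proof (intro bexI[OF _ G01] allI impI)
    fix i assume i: "i < length (rev vs)"
    then have i': "i < length vs" by simp
    have "(\<sigma>0 \<circ> \<sigma>1) (rev vs ! i) = cyc vs (1 - (2 - (-1 - int i)))" using i' R0 R1 by (simp add: cyc_rev)
    also have "1 - (2 - (-1 - int i)) = - 2 - int i" by simp
    finally have "(\<sigma>0 \<circ> \<sigma>1) (rev vs ! i) = cyc vs (- 2 - int i)" .
    then show "(\<sigma>0 \<circ> \<sigma>1) (rev vs ! i) = rev vs ! (Suc i mod length (rev vs))"
      using revsuc[OF i'] by simp
  qed
  have S: "\<exists>g\<in>map_aut_group V E F bd. \<exists>k. \<forall>i < length vs. g (vs ! i) = rev vs ! ((i + k) mod length vs)"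
  proof (intro bexI[OF _ G0] exI[of _ "length vs - 2"] allI impI)
    fix i assume i: "i < length vs"
    have lhs: "\<sigma>0 (vs ! i) = cyc vs (1 - int i)" using i R0 by (simp add: cyc_nth)
    have "(i + (length vs - 2)) mod length vs < length vs" using lp by simp
    then have "rev vs ! ((i + (length vs - 2)) mod length vs) = cyc vs (-1 - int ((i + (length vs - 2)) mod length vs))"
      by (rule cyc_rev)
    also have "\<dots> = cyc vs (1 - int i)"
    proof (rule cyc_cong)
      define t where "t = int i + n - 2"
      have "int ((i + (length vs - 2)) mod length vs) = t mod n"
        using l n_def t_def by (simp add: zmod_int of_nat_diff)
      then have "-1 - int ((i + (length vs - 2)) mod length vs) - (1 - int i) = - (n - (t - t mod n))"
        using t_def by simp
      moreover have "n dvd (n - (t - t mod n))" using int_dvd_sub_mod[of n t] by simp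
      ultimately show "int (length vs) dvd (-1 - int ((i + (length vs - 2)) mod length vs) - (1 - int i))"
        using n_def by (simp only: dvd_minus_iff)
    qed
    finally show "\<sigma>0 (vs ! i) = rev vs ! ((i + (length vs - 2)) mod length vs)" using lhs by simp
  qed
  show ?thesis unfolding symmetric_consistent_cycle_def using C1 C2 S by blast
qed

end
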